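(* Let $K$ be a field of characteristic $0$ and $a(t),b(t)\in K[t]$. Assume that $Na'(t)+b(t)$ and $a(t)$ are coprime for every positive integer $N$. Let $n$ be a positive integer and $P(t),Q(t)\in K[t]$ satisfy $Q(t)a(t)^n=L^*\cdot P(t)$. Then $P(t)$ is divisible by $a(t)^n$.
   Context: $L=-a(z)\frac{d}{dz}+b(z)$ and its adjoint $L^*$ acts on $K[t]$ by $L^*\cdot P(t)=\frac{d}{dt}(a(t)P(t))+b(t)P(t)=(a'(t)+b(t))P(t)+a(t)P'(t)$. *)

theory Defs
  imports "HOL-Computational_Algebra.Computational_Algebra"
begin

text \<open>Adjoint operator L* of L = -a(z) d/dz + b(z), acting on K[t]:
  L* P = (a' + b) P + a P'.\<close>
definition adjL :: "'a::field poly \<Rightarrow> 'a poly \<Rightarrow> 'a poly \<Rightarrow> 'a poly" where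
  "adjL a b P = (pderiv a + b) * P + a * pderiv P"

end

theory Submission
  imports Defs
begin

lemma smult_of_nat_eq: "smult (of_nat n) (p :: 'a::field poly) = of_nat n * p"
  by (simp add: of_nat_poly)

lemma adjL_mult_pow:
  fixes a b R :: "'a::field_char_0 poly"
  shows "adjL a b (a ^ k * R) = a ^ k * ((smult (of_nat (Suc k)) (pderiv a) + b) * R + a * pderiv R)"
proof (cases k)
  case 0
  then show ?thesis by (simp add: adjL_def)
next
  case (Suc m)
  have "pderiv (a ^ k) = smult (of_nat k) (a ^ m * pderiv a)"
    using Suc pderiv_power[of a k] by simp
  then have "pderiv (a ^ k * R) = a ^ k * pderiv R + R * smult (of_nat k) (a ^ m * pderiv a)"
    by (simp add: pderiv_mult)
  then have d: "pderiv (a ^ k * R) = a ^ k * pderiv R + R * (of_nat k * (a ^ m * pderiv a))"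
    by (simp add: smult_of_nat_eq)
  have ak: "a ^ k = a * a ^ m" using Suc by simp
  have sk: "smult (of_nat (Suc k)) (pderiv a) = (1 + of_nat k) * pderiv a"
    using smult_of_nat_eq[of "Suc k" "pderiv a"] by (simp only: of_nat_Suc)
  show ?thesis unfolding adjL_def d sk unfolding ak
    by algebra
qed

lemma bezout_poly_field:
  fixes x a :: "'a::field poly"
  assumes cop: "coprime x a"
  shows "\<exists>u v. u * x + v * a = 1"
proof -
  define P where "P = (\<lambda>k. \<exists>u v. u * x + v * a \<noteq> 0 \<and> degree (u * x + v * a) = k)"
  have nz: "x \<noteq> 0 \<or> a \<noteq> 0"
  proof (rule ccontr)
    assume "\<not> (x \<noteq> 0 \<or> a \<noteq> 0)"
    then have "x = 0" "a = 0" by auto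
    with cop have "is_unit (0 :: 'a poly)" by simp
    then show False by simp
  qed
  have ex: "\<exists>k. P k"
  proof (cases "x = 0")
    case True
    then have "0 * x + 1 * a \<noteq> 0" using nz by simp
    then show ?thesis unfolding P_def by blast
  next
    case False
    then have "1 * x + 0 * a \<noteq> 0" by simp
    then show ?thesis unfolding P_def by blast
  qed
  define k where "k = (LEAST k. P k)"
  have "P k" unfolding k_def using ex by (rule LeastI_ex)
  then obtain u v where d0: "u * x + v * a \<noteq> 0" and dk: "degree (u * x + v * a) = k"
    unfolding P_def by blast
  define d where "d = u * x + v * a"
  have mini: "\<And>u' v'. u' * x + v' * a \<noteq> 0 \<Longrightarrow> k \<le> degree (u' * x + v' * a)"
    unfolding k_def by (rule Least_le) (auto simp: P_def)
  have dz: "d \<noteq> 0" using d0 d_def by simp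
  have dvd_gen: "d dvd y" if y: "y = u' * x + v' * a" for y u' v'
  proof (rule ccontr)
    assume nd: "\<not> d dvd y"
    define q where "q = y div d"
    have "y mod d = y - q * d" using div_mult_mod_eq[of y d] unfolding q_def
      by (simp add: algebra_simps)
    also have "\<dots> = (u' - q * u) * x + (v' - q * v) * a"
      unfolding y d_def by (simp add: algebra_simps)
    finally have me: "y mod d = (u' - q * u) * x + (v' - q * v) * a" .
    have "y mod d \<noteq> 0" using nd by (simp add: mod_eq_0_iff_dvd)
    then have "k \<le> degree (y mod d)" using mini me by metis
    moreover have "degree (y mod d) < degree d"
      using degree_mod_less_degree[OF dz nd] .
    ultimately show False using dk d_def by simp
  qed
  have "d dvd x" by (rule dvd_gen[of x 1 0]) simp
  moreover have "d dvd a" by (rule dvd_gen[of a 0 1]) simp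
  ultimately have "is_unit d" using cop by (rule coprime_common_divisor[rotated 1])
  then obtain e where e: "1 = d * e" by (auto elim: dvdE)
  have "(e * u) * x + (e * v) * a = 1" unfolding e d_def by (simp add: algebra_simps)
  then show ?thesis by blast
qed

lemma euclid_poly_field:
  fixes x a r :: "'a::field poly"
  assumes cop: "coprime x a" and dv: "a dvd x * r"
  shows "a dvd r"
proof -
  obtain u v where uv: "u * x + v * a = 1" using bezout_poly_field[OF cop] by blast
  have "r = u * (x * r) + a * (v * r)" using uv
    by (metis (no_types, lifting) distrib_right mult.assoc mult.commute mult_1)
  moreover have "a dvd u * (x * r) + a * (v * r)" using dv by simp
  ultimately show ?thesis by simp
qed

theorem lemma3p6:
  fixes a b P Q :: "'a::field_char_0 poly" and n :: nat
  assumes cop: "\<And>N::nat. N > 0 \<Longrightarrow> coprime (smult (of_nat N) (pderiv a) + b) a"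
    and n: "n > 0"
    and eq: "Q * a ^ n = adjL a b P"
  shows "a ^ n dvd P"
proof -
  have "k \<le> n \<Longrightarrow> a ^ k dvd P" for k
  proof (induction k)
    case 0 then show ?case by simp
  next
    case (Suc k)
    then obtain R where R: "P = a ^ k * R" by (auto elim: dvdE)
    show ?case
    proof (cases "a = 0 \<and> k > 0")
      case True then show ?thesis using R by (simp add: power_0_left)
    next
      case z: False
    define S where "S = (smult (of_nat (Suc k)) (pderiv a) + b) * R + a * pderiv R"
    have "adjL a b P = a ^ k * S" unfolding R S_def by (rule adjL_mult_pow)
    with eq have eq2: "Q * a ^ n = a ^ k * S" by simp
    have aS: "a dvd S"
    proof (cases "a = 0")
      case True
      show ?thesis
      proof (cases k)
        case 0
        then have "S = Q * a ^ n" using eq2 by simp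
        then show ?thesis using n by (simp add: True)
      next
        case (Suc m) then show ?thesis
          using z True by simp
      qed
    next
      case False
      have pn: "a ^ n = a ^ k * a ^ (n - k)"
        using Suc.prems by (simp flip: power_add)
      have h1: "a ^ k * (a ^ (n - k) * Q) = a ^ k * S"
        using eq2 unfolding pn by (simp only: ac_simps)
      have h2: "a ^ k \<noteq> 0" using False by simp
      have "a ^ (n - k) * Q = S" using mult_left_cancel[OF h2] h1 by blast
      then have Se: "S = a ^ (n - k) * Q" by (rule sym)
      have "a dvd a ^ (n - k)" by (rule dvd_power) (use Suc.prems in simp)
      then show ?thesis unfolding Se by (rule dvd_mult2)
    qed
    have "a dvd a * pderiv R" by simp
    then have "a dvd (smult (of_nat (Suc k)) (pderiv a) + b) * R"
      using aS unfolding S_def by (simp only: dvd_add_left_iff)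
    then have "a dvd R"
    proof -
      have "coprime (smult (of_nat (Suc k)) (pderiv a) + b) a"
        using cop[of "Suc k"] by simp
      then show ?thesis using \<open>a dvd (smult (of_nat (Suc k)) (pderiv a) + b) * R\<close>
        by (rule euclid_poly_field)
    qed
    then show ?thesis using R by simp
  qed
  qed
  then show ?thesis by simp
qed

end
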